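(* Let $C=\operatorname{conv}(\gamma_1\cup\gamma_2\cup\gamma_3\cup\gamma_4)\subset\mathbb{R}^3$, where for $t\in[0,\pi/4]$ \[ \gamma_1(t)=(0,-\sin t,\cos t-1),\ \gamma_2(t)=(0,\cos t-1,-\sin t),\ \gamma_3(t)=(-\sin t,1-\cos t,0),\ \gamma_4(t)=(\cos t-1,\sin t,0) \] (here $\gamma_i$ also denotes the image curve). Then $F=\operatorname{conv}(\gamma_3\cup\gamma_4)$ is a face of $C$ containing $0$, and $\mathcal{T}(0;C)\cap\operatorname{span}F\neq\mathcal{T}(0;F)$; specifically $g=(0,-1,0)\in\mathcal{T}(0;C)\cap\operatorname{span}F$ but $g\notin\mathcal{T}(0;F)$. Consequently the closed convex cone $K=\operatorname{cone}(C\times\{1\})\subset\mathbb{R}^4$ is not tangentially exposed (and hence, by Theorem 3.1, not facially dual complete).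
   Context: Tangent cone: $\mathcal{T}(x;D)=\operatorname{cl}\{d: x+\epsilon d\in D\text{ for some }\epsilon>0\}$. A face of a closed convex set $D$ is a closed convex $F\subseteq D$ such that $x\in F$, $y,z\in D$, $x\in(y,z)$ imply $y,z\in F$. A closed convex cone $K$ is tangentially exposed if $\mathcal{T}(x;K)\cap\operatorname{span}F=\mathcal{T}(x;F)$ for every face $F\neq K$ and every $x\in F$. $\operatorname{cone}(S)=\{\lambda s:\lambda\ge0, s\in \operatorname{conv} S\}$. Theorem 3.1 states: every facially dual complete closed convex cone (one with $K^*+F^\perp$ closed for all nonempty faces $F\ne K$) is tangentially exposed. *)

theory Defs
  imports "HOL-Analysis.Analysis"
begin

definition tangent_cone :: "'a::real_normed_vector \<Rightarrow> 'a set \<Rightarrow> 'a set" where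
  "tangent_cone x D = closure {d. \<exists>e>0. x + e *\<^sub>R d \<in> D}"

definition is_face :: "'a::real_normed_vector set \<Rightarrow> 'a set \<Rightarrow> bool" where
  "is_face F D \<longleftrightarrow> closed F \<and> convex F \<and> F \<subseteq> D \<and>
     (\<forall>x\<in>F. \<forall>y\<in>D. \<forall>z\<in>D. x \<in> open_segment y z \<longrightarrow> y \<in> F \<and> z \<in> F)"

definition tangentially_exposed :: "'a::real_normed_vector set \<Rightarrow> bool" where
  "tangentially_exposed K \<longleftrightarrow>
     (\<forall>F. is_face F K \<and> F \<noteq> K \<longrightarrow>
        (\<forall>x\<in>F. tangent_cone x K \<inter> span F = tangent_cone x F))"

definition cone_gen :: "'a::real_vector set \<Rightarrow> 'a set" where
  "cone_gen S = {c *\<^sub>R s | c s. c \<ge> 0 \<and> s \<in> convex hull S}"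

definition gamma1 :: "real \<Rightarrow> real^3" where
  "gamma1 t = vector [0, - sin t, cos t - 1]"
definition gamma2 :: "real \<Rightarrow> real^3" where
  "gamma2 t = vector [0, cos t - 1, - sin t]"
definition gamma3 :: "real \<Rightarrow> real^3" where
  "gamma3 t = vector [- sin t, 1 - cos t, 0]"
definition gamma4 :: "real \<Rightarrow> real^3" where
  "gamma4 t = vector [cos t - 1, sin t, 0]"

definition exC :: "(real^3) set" where
  "exC = convex hull (gamma1 ` {0..pi/4} \<union> gamma2 ` {0..pi/4} \<union>
                      gamma3 ` {0..pi/4} \<union> gamma4 ` {0..pi/4})"

definition exF :: "(real^3) set" where
  "exF = convex hull (gamma3 ` {0..pi/4} \<union> gamma4 ` {0..pi/4})"

end

theory Submission imports Defs begin

definition J :: "real set" where "J = {0..pi/4}"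
definition Gen :: "(real^3) set" where
  "Gen = gamma1 ` J \<union> gamma2 ` J \<union> gamma3 ` J \<union> gamma4 ` J"
definition GF :: "(real^3) set" where "GF = gamma3 ` J \<union> gamma4 ` J"

lemma exC_eq: "exC = convex hull Gen" unfolding exC_def Gen_def J_def by simp
lemma exF_eq: "exF = convex hull GF" unfolding exF_def GF_def J_def by simp

lemma ax3: "axis 3 1 \<bullet> (x::real^3) = x $ 3" by (simp add: inner_axis')
lemma ax2: "axis 2 1 \<bullet> (x::real^3) = x $ 2" by (simp add: inner_axis')

lemma gamma_cont:
  "continuous_on J gamma1" "continuous_on J gamma2" "continuous_on J gamma3" "continuous_on J gamma4"
proof -
  have e: "\<And>a b c::real. (vector [a,b,c] :: real^3) = a *\<^sub>R axis 1 1 + b *\<^sub>R axis 2 1 + c *\<^sub>R axis 3 1"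
    by (simp add: vec_eq_iff forall_3 axis_def)
  show "continuous_on J gamma1" "continuous_on J gamma2" "continuous_on J gamma3" "continuous_on J gamma4"
    unfolding gamma1_def gamma2_def gamma3_def gamma4_def e by (intro continuous_intros)+
qed

lemma J_props: "t \<in> J \<Longrightarrow> 0 \<le> sin t \<and> 0 < cos t \<and> cos t \<le> 1"
  unfolding J_def using pi_gt3 by (auto intro!: sin_ge_zero cos_gt_zero_pi)

lemma Gen_le: "s \<in> Gen \<Longrightarrow> s $ 3 \<le> 0"
  unfolding Gen_def using J_props by (auto simp: gamma1_def gamma2_def gamma3_def gamma4_def)

lemma GF_props: "s \<in> GF \<Longrightarrow> s $ 3 = 0 \<and> s $ 2 \<ge> 0"
  unfolding GF_def using J_props by (auto simp: gamma3_def gamma4_def)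

lemma zero_GF: "0 \<in> GF"
proof -
  have "gamma3 0 = 0" by (simp add: gamma3_def vec_eq_iff forall_3)
  moreover have "(0::real) \<in> J" unfolding J_def by (simp add: pi_gt_zero less_imp_le)
  ultimately show ?thesis unfolding GF_def by force
qed

lemma Gen_zero: "s \<in> Gen \<Longrightarrow> s $ 3 = 0 \<Longrightarrow> s \<in> GF"
proof -
  assume s: "s \<in> Gen" and z: "s $ 3 = 0"
  have sc: "\<And>t::real. cos t = 1 \<Longrightarrow> sin t = 0"
  proof -
    fix t :: real assume "cos t = 1"
    then have "(sin t)^2 = 0" using sin_cos_squared_add[of t] by simp
    then show "sin t = 0" by simp
  qed
  have cs: "\<And>t::real. t \<in> J \<Longrightarrow> sin t = 0 \<Longrightarrow> cos t = 1"
  proof -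
    fix t :: real assume "t \<in> J" "sin t = 0"
    then have "(cos t)^2 = 1" using sin_cos_squared_add[of t] by simp
    then show "cos t = 1" using J_props[OF \<open>t \<in> J\<close>] by (auto simp: power2_eq_1_iff)
  qed
  have G1: "s = 0" if "t \<in> J" "s = gamma1 t" for t
  proof -
    have "cos t = 1" using z that by (simp add: gamma1_def)
    then show "s = 0" using sc[of t] \<open>s = gamma1 t\<close> by (simp add: gamma1_def vec_eq_iff forall_3)
  qed
  have G2: "s = 0" if "t \<in> J" "s = gamma2 t" for t
  proof -
    have "sin t = 0" using z that by (simp add: gamma2_def)
    then show "s = 0" using cs[of t] that by (simp add: gamma2_def vec_eq_iff forall_3)
  qed
  from s have "s \<in> gamma1 ` J \<or> s \<in> gamma2 ` J \<or> s \<in> GF" unfolding Gen_def GF_def by blast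
  then show ?thesis
  proof (elim disjE)
    assume "s \<in> gamma1 ` J"
    then obtain t where "t \<in> J" "s = gamma1 t" by blast
    then have "s = 0" using G1 by blast
    then show ?thesis using zero_GF by simp
  next
    assume "s \<in> gamma2 ` J"
    then obtain t where "t \<in> J" "s = gamma2 t" by blast
    then have "s = 0" using G2 by blast
    then show ?thesis using zero_GF by simp
  qed
qed

lemma hull_level0:
  fixes S :: "'a::euclidean_space set"
  assumes le: "\<And>s. s \<in> S \<Longrightarrow> a \<bullet> s \<le> 0"
    and x: "x \<in> convex hull S" and x0: "a \<bullet> x = 0"
  shows "x \<in> convex hull {s\<in>S. a \<bullet> s = 0}"
proof -
  let ?S0 = "{s\<in>S. a \<bullet> s = 0}" and ?S1 = "{s\<in>S. a \<bullet> s < 0}"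
  have S: "S = ?S0 \<union> ?S1" using le by force
  have h1: "convex hull ?S1 \<subseteq> {y. a \<bullet> y < 0}"
    by (rule hull_minimal) (auto simp: convex_halfspace_lt)
  have h0: "convex hull ?S0 \<subseteq> {y. a \<bullet> y = 0}"
    by (rule hull_minimal) (auto simp: convex_hyperplane)
  show ?thesis
  proof (cases "?S1 = {}")
    case True
    then have "S = ?S0" using S by auto
    then show ?thesis using x by simp
  next
    case False
    show ?thesis
    proof (cases "?S0 = {}")
      case True
      then have "S = ?S1" using S by auto
      then have "a \<bullet> x < 0" using x h1 by auto
      then show ?thesis using x0 by simp
    next
      case False2: False
      have "convex hull S \<subseteq> convex hull (convex hull ?S0 \<union> convex hull ?S1)"
      proof -
        have "S \<subseteq> convex hull ?S0 \<union> convex hull ?S1"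
          using hull_subset[of ?S0 convex] hull_subset[of ?S1 convex] S by blast
        then show ?thesis by (rule hull_mono)
      qed
      also have "\<dots> = {u *\<^sub>R s + v *\<^sub>R t | u v s t. u \<ge> 0 \<and> v \<ge> 0 \<and> u + v = 1 \<and> s \<in> convex hull ?S0 \<and> t \<in> convex hull ?S1}"
        by (rule convex_hull_union_two) (use False False2 in auto)
      finally obtain u v s t where uv: "u \<ge> 0" "v \<ge> 0" "u + v = 1" and s: "s \<in> convex hull ?S0"
        and t: "t \<in> convex hull ?S1" and xe: "x = u *\<^sub>R s + v *\<^sub>R t" using x by blast
      have "a \<bullet> s = 0" using s h0 by auto
      moreover have "a \<bullet> t < 0" using t h1 by auto
      ultimately have "v * (a \<bullet> t) = 0" using x0 xe by (simp add: inner_add_right)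
      then have "v = 0" using \<open>a \<bullet> t < 0\<close> by simp
      then have "x = s" using xe uv by simp
      then show ?thesis using s by simp
    qed
  qed
qed

lemma exC_le: "x \<in> exC \<Longrightarrow> x $ 3 \<le> 0"
proof -
  have "exC \<subseteq> {x. axis 3 1 \<bullet> x \<le> (0::real)}"
    unfolding exC_eq
  proof (rule hull_minimal)
    show "Gen \<subseteq> {x. axis 3 1 \<bullet> x \<le> (0::real)}" by (auto simp: ax3 Gen_le)
  qed (rule convex_halfspace_le)
  then show "x \<in> exC \<Longrightarrow> x $ 3 \<le> 0" by (auto simp: ax3)
qed

lemma exF_props: "x \<in> exF \<Longrightarrow> x $ 3 = 0 \<and> x $ 2 \<ge> 0"
proof -
  have "exF \<subseteq> {x. axis 3 1 \<bullet> x = (0::real)} \<inter> {x. axis 2 1 \<bullet> x \<ge> (0::real)}"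
    unfolding exF_eq
  proof (rule hull_minimal)
    show "GF \<subseteq> {x. axis 3 1 \<bullet> x = (0::real)} \<inter> {x. axis 2 1 \<bullet> x \<ge> (0::real)}"
      by (auto simp: ax3 ax2 GF_props)
  qed (intro convex_Int convex_hyperplane convex_halfspace_ge)
  then show "x \<in> exF \<Longrightarrow> x $ 3 = 0 \<and> x $ 2 \<ge> 0" by (auto simp: ax3 ax2)
qed

lemma exF_sub: "exF \<subseteq> exC"
  unfolding exF_eq exC_eq by (rule hull_mono) (auto simp: Gen_def GF_def)

lemma zero_exF: "0 \<in> exF"
  unfolding exF_eq by (rule hull_inc) (rule zero_GF)

lemma exC_zero: "x \<in> exC \<Longrightarrow> x $ 3 = 0 \<Longrightarrow> x \<in> exF"
proof -
  assume x: "x \<in> exC" "x $ 3 = 0"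
  have "x \<in> convex hull {s\<in>Gen. axis 3 1 \<bullet> s = 0}"
    by (rule hull_level0) (use x in \<open>auto simp: ax3 Gen_le exC_eq\<close>)
  also have "\<dots> \<subseteq> exF" unfolding exF_eq by (rule hull_mono) (auto simp: ax3 Gen_zero)
  finally show ?thesis .
qed

lemma compact_J: "compact J" by (simp add: J_def)

lemma compact_gen: "compact Gen" "compact GF"
proof -
  show "compact Gen" unfolding Gen_def
    by (intro compact_Un compact_continuous_image gamma_cont compact_J)
  show "compact GF" unfolding GF_def
    by (intro compact_Un compact_continuous_image gamma_cont compact_J)
qed

lemma compact_exC: "compact exC" and compact_exF: "compact exF"
  unfolding exC_eq exF_eq by (auto intro!: compact_convex_hull compact_gen)

lemma face: "is_face exF exC"
  unfolding is_face_def
proof (intro conjI ballI impI)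
  show "closed exF" by (simp add: compact_exF compact_imp_closed)
  show "convex exF" by (simp add: exF_eq)
  show "exF \<subseteq> exC" by (rule exF_sub)
  fix x y z assume x: "x \<in> exF" and y: "y \<in> exC" and z: "z \<in> exC" and seg: "x \<in> open_segment y z"
  obtain u where u: "0 < u" "u < 1" and xe: "x = (1 - u) *\<^sub>R y + u *\<^sub>R z"
    using seg by (auto simp: in_segment)
  have "(1 - u) * y $ 3 + u * z $ 3 = 0" using exF_props[OF x] xe by simp
  moreover have "y $ 3 \<le> 0" "z $ 3 \<le> 0" using y z exC_le by auto
  moreover have "(1 - u) * y $ 3 \<le> 0" "u * z $ 3 \<le> 0"
    using \<open>y $ 3 \<le> 0\<close> \<open>z $ 3 \<le> 0\<close> u by (auto intro: mult_nonneg_nonpos)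
  ultimately have "(1 - u) * y $ 3 = 0" "u * z $ 3 = 0" by linarith+
  then have "y $ 3 = 0 \<and> z $ 3 = 0" using u by simp
  then show "y \<in> exF" "z \<in> exF" using y z exC_zero by auto
qed

lemma approx:
  assumes "\<epsilon> > 0"
  shows "\<exists>t\<in>J. sin t > 0 \<and> dist (vector [0, -1, (cos t - 1) / sin t] :: real^3) (vector [0, -1, 0]) < \<epsilon>
     \<and> sin t *\<^sub>R (vector [0, -1, (cos t - 1) / sin t] :: real^3) = gamma1 t"
proof -
  define t where "t = min (\<epsilon>/2) (pi/4)"
  have t0: "0 < t" using assms by (simp add: t_def)
  have tJ: "t \<in> J" using t0 by (simp add: t_def J_def)
  have "t \<le> pi/4" by (simp add: t_def)
  then have st: "sin t > 0" using t0 pi_gt_zero by (intro sin_gt_zero) linarith+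
  have ct: "0 < cos t" "cos t \<le> 1" using J_props[OF tJ] by auto
  let ?d = "vector [0, -1, (cos t - 1) / sin t] :: real^3"
  have "?d - vector [0, -1, 0] = ((cos t - 1) / sin t) *\<^sub>R axis 3 1"
    by (simp add: vec_eq_iff forall_3 axis_def)
  then have "dist ?d (vector [0, -1, 0]) = \<bar>(cos t - 1) / sin t\<bar>"
    by (simp add: dist_norm)
  also have "\<dots> = (1 - cos t) / sin t" using st ct by (simp add: abs_div)
  also have "\<dots> \<le> sin t"
  proof -
    have "(1 - cos t) * (1 + cos t) = (sin t)^2" using sin_cos_squared_add[of t]
      by (simp add: algebra_simps power2_eq_square)
    moreover have "(1 - cos t) * 1 \<le> (1 - cos t) * (1 + cos t)"
      using ct by (intro mult_left_mono) auto
    ultimately have "1 - cos t \<le> (sin t)^2" by simp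
    then show ?thesis using st by (simp add: divide_le_eq power2_eq_square)
  qed
  also have "\<dots> \<le> t" using t0 by (simp add: sin_x_le_x)
  also have "\<dots> < \<epsilon>" using assms by (simp add: t_def)
  finally have dd: "dist ?d (vector [0, -1, 0]) < \<epsilon>" .
  have "sin t *\<^sub>R ?d = gamma1 t" using st by (simp add: vec_eq_iff forall_3 gamma1_def)
  then show ?thesis using tJ st dd by blast
qed

lemma g_tan: "vector [0, -1, 0] \<in> tangent_cone 0 exC"
  unfolding tangent_cone_def closure_approachable
proof (intro allI impI)
  fix \<epsilon> :: real assume "\<epsilon> > 0"
  from approx[OF this] obtain t where t: "t \<in> J" "sin t > 0"
    "dist (vector [0, -1, (cos t - 1) / sin t] :: real^3) (vector [0, -1, 0]) < \<epsilon>"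
    "sin t *\<^sub>R (vector [0, -1, (cos t - 1) / sin t] :: real^3) = gamma1 t" by blast
  have "gamma1 t \<in> exC" unfolding exC_eq Gen_def
    by (rule hull_inc) (use t(1) in blast)
  then show "\<exists>y\<in>{d. \<exists>e>0. 0 + e *\<^sub>R d \<in> exC}. dist y (vector [0, -1, 0]) < \<epsilon>"
    using t by force
qed

lemma g_notan: "(vector [0, -1, 0] :: real^3) \<notin> tangent_cone 0 exF"
proof -
  have "tangent_cone 0 exF \<subseteq> {x. axis 2 1 \<bullet> x \<ge> (0::real)}"
    unfolding tangent_cone_def
  proof (rule closure_minimal)
    show "{d. \<exists>e>0. 0 + e *\<^sub>R d \<in> exF} \<subseteq> {x. axis 2 1 \<bullet> x \<ge> (0::real)}"
    proof
      fix d assume "d \<in> {d. \<exists>e>0. 0 + e *\<^sub>R d \<in> exF}"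
      then obtain e where e: "e > 0" "e *\<^sub>R d \<in> exF" by auto
      then have "e * d $ 2 \<ge> 0" using exF_props by fastforce
      then show "d \<in> {x. axis 2 1 \<bullet> x \<ge> (0::real)}" using e by (simp add: ax2 zero_le_mult_iff)
    qed
  qed (rule closed_halfspace_ge)
  then show ?thesis by (auto simp: ax2)
qed

lemma g_comb: "\<exists>a b. (vector [0, -1, 0] :: real^3) = a *\<^sub>R gamma3 (pi/4) + b *\<^sub>R gamma4 (pi/4)"
proof -
  define s where "s = sqrt 2 / 2"
  have s: "1 - 2 * s \<noteq> 0" by (simp add: s_def)
  define D where "D = 1 - 2 * s"
  have "(vector [0, -1, 0] :: real^3) = ((s - 1) / D) *\<^sub>R gamma3 (pi/4) + (s / D) *\<^sub>R gamma4 (pi/4)"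
  proof -
    have D: "D \<noteq> 0" using s by (simp add: D_def)
    have e2: "(s - 1) * (1 - s) + s * s = - D" by (simp add: D_def algebra_simps)
    have c2: "(s - 1) / D * (1 - s) + s / D * s = -1"
      using D e2 by (simp add: field_simps) 
    have c1: "(s - 1) / D * (- s) + s / D * (s - 1) = 0"
      using D by (simp add: field_simps)
    show ?thesis
      unfolding gamma3_def gamma4_def sin_45 cos_45 s_def[symmetric]
      using c1 c2 by (simp add: vec_eq_iff forall_3)
  qed
  then show ?thesis by blast
qed

lemma pJ: "pi/4 \<in> J" by (simp add: J_def pi_gt_zero less_imp_le)

lemma gamma34_J: "gamma3 (pi/4) \<in> exF" "gamma4 (pi/4) \<in> exF"
proof -
  show "gamma3 (pi/4) \<in> exF" unfolding exF_eq GF_def by (rule hull_inc) (use pJ in blast)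
  show "gamma4 (pi/4) \<in> exF" unfolding exF_eq GF_def by (rule hull_inc) (use pJ in blast)
qed

lemma g_span: "(vector [0, -1, 0] :: real^3) \<in> span exF"
  using g_comb gamma34_J by (metis span_add span_base span_scale)

lemma cone_gen_eq: assumes "convex S" shows "cone_gen S = conic hull S"
proof -
  have "convex hull S = S" using assms by (rule hull_same)
  then show ?thesis unfolding cone_gen_def conic_hull_explicit by simp
qed

lemma memK: "p \<in> conic hull (S \<times> {1::real}) \<longleftrightarrow> (\<exists>c x. c \<ge> 0 \<and> x \<in> S \<and> p = (c *\<^sub>R x, c))"
  by (auto simp: conic_hull_explicit)

definition KK :: "((real^3) \<times> real) set" where "KK = conic hull (exC \<times> {1})"
definition KF :: "((real^3) \<times> real) set" where "KF = conic hull (exF \<times> {1})"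

lemma K_le: "p \<in> KK \<Longrightarrow> fst p $ 3 \<le> 0"
proof -
  assume "p \<in> KK"
  then obtain c x where cx: "c \<ge> 0" "x \<in> exC" "p = (c *\<^sub>R x, c)" unfolding KK_def memK by auto
  then show ?thesis using mult_nonneg_nonpos[OF cx(1) exC_le[OF cx(2)]] by simp
qed

lemma K_zero: "p \<in> KK \<Longrightarrow> fst p $ 3 = 0 \<Longrightarrow> p \<in> KF"
proof -
  assume p: "p \<in> KK" "fst p $ 3 = 0"
  then obtain c x where cx: "c \<ge> 0" "x \<in> exC" "p = (c *\<^sub>R x, c)" unfolding KK_def memK by auto
  then have "c * x $ 3 = 0" using p by simp
  then consider "c = 0" | "x $ 3 = 0" by auto
  then show "p \<in> KF"
  proof cases
    case 1
    then have "p = (0 *\<^sub>R 0, 0)" using cx by simp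
    then show ?thesis unfolding KF_def memK using zero_exF by blast
  next
    case 2
    then have "x \<in> exF" using cx exC_zero by auto
    then show ?thesis unfolding KF_def memK using cx by blast
  qed
qed

lemma KF_props: "p \<in> KF \<Longrightarrow> fst p $ 3 = 0 \<and> fst p $ 2 \<ge> 0"
  unfolding KF_def memK using exF_props by auto

lemma KF_sub: "KF \<subseteq> KK"
  unfolding KF_def KK_def by (rule hull_mono) (use exF_sub in auto)

lemma compact_sets: "compact (exC \<times> {1::real})" "compact (exF \<times> {1::real})"
  by (auto intro!: compact_Times compact_exC compact_exF)

lemma closed_KK: "closed KK" unfolding KK_def
  by (rule closed_conic_hull) (use compact_sets in \<open>auto simp: zero_prod_def\<close>)

lemma closed_KF: "closed KF" unfolding KF_def
  by (rule closed_conic_hull) (use compact_sets in \<open>auto simp: zero_prod_def\<close>)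

lemma convex_KK: "convex KK" unfolding KK_def
  by (intro convex_conic_hull convex_Times) (auto simp: exC_eq)

lemma convex_KF: "convex KF" unfolding KF_def
  by (intro convex_conic_hull convex_Times) (auto simp: exF_eq)

lemma cone_KK: "cone KK"
  unfolding cone_def
proof (intro ballI allI impI)
  fix p and d :: real assume "p \<in> KK" "d \<ge> 0"
  then obtain c x where "c \<ge> 0" "x \<in> exC" "p = (c *\<^sub>R x, c)" unfolding KK_def memK by auto
  then show "d *\<^sub>R p \<in> KK" unfolding KK_def memK
    using \<open>d \<ge> 0\<close> by (intro exI[of _ "d * c"] exI[of _ x]) auto
qed

lemma face_K: "is_face KF KK"
  unfolding is_face_def
proof (intro conjI ballI impI)
  show "closed KF" by (rule closed_KF)
  show "convex KF" by (rule convex_KF)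
  show "KF \<subseteq> KK" by (rule KF_sub)
  fix x y z assume x: "x \<in> KF" and y: "y \<in> KK" and z: "z \<in> KK" and seg: "x \<in> open_segment y z"
  obtain u where u: "0 < u" "u < 1" and xe: "x = (1 - u) *\<^sub>R y + u *\<^sub>R z"
    using seg by (auto simp: in_segment)
  have "(1 - u) * fst y $ 3 + u * fst z $ 3 = 0" using KF_props[OF x] xe by simp
  moreover have "fst y $ 3 \<le> 0" "fst z $ 3 \<le> 0" using y z K_le by auto
  moreover have "(1 - u) * fst y $ 3 \<le> 0" "u * fst z $ 3 \<le> 0"
    using \<open>fst y $ 3 \<le> 0\<close> \<open>fst z $ 3 \<le> 0\<close> u by (auto intro: mult_nonneg_nonpos)
  ultimately have "(1 - u) * fst y $ 3 = 0" "u * fst z $ 3 = 0" by linarith+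
  then have "fst y $ 3 = 0 \<and> fst z $ 3 = 0" using u by simp
  then show "y \<in> KF" "z \<in> KF" using y z K_zero by auto
qed

lemma base_KF: "(0, 1) \<in> KF"
proof -
  have "(0::real^3, 1::real) = (1 *\<^sub>R 0, 1)" by simp
  then show ?thesis unfolding KF_def memK using zero_exF by (metis zero_le_one)
qed

lemma KF_ne: "KF \<noteq> KK"
proof
  assume eq: "KF = KK"
  have "gamma1 (pi/4) \<in> exC" unfolding exC_eq Gen_def
    by (rule hull_inc) (use pJ in blast)
  then have "(gamma1 (pi/4), 1) \<in> KK" unfolding KK_def memK
    by (intro exI[of _ 1] exI[of _ "gamma1 (pi/4)"]) simp
  then have "gamma1 (pi/4) $ 3 = 0" using eq KF_props by fastforce
  moreover have "sqrt (2::real) \<noteq> 2"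
  proof
    assume "sqrt (2::real) = 2"
    then have "(sqrt (2::real))^2 = 4" by simp
    then show False by simp
  qed
  ultimately show False by (simp add: gamma1_def cos_45)
qed

lemma gK_tan: "((vector [0, -1, 0] :: real^3), 0::real) \<in> tangent_cone (0, 1) KK"
  unfolding tangent_cone_def closure_approachable
proof (intro allI impI)
  fix \<epsilon> :: real assume "\<epsilon> > 0"
  from approx[OF this] obtain t where t: "t \<in> J" "sin t > 0"
    "dist (vector [0, -1, (cos t - 1) / sin t] :: real^3) (vector [0, -1, 0]) < \<epsilon>"
    "sin t *\<^sub>R (vector [0, -1, (cos t - 1) / sin t] :: real^3) = gamma1 t" by blast
  have "gamma1 t \<in> exC" unfolding exC_eq Gen_def
    by (rule hull_inc) (use t(1) in blast)
  then have "(gamma1 t, 1) \<in> KK" unfolding KK_def memK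
    by (intro exI[of _ 1] exI[of _ "gamma1 t"]) simp
  then have "(0, 1) + sin t *\<^sub>R ((vector [0, -1, (cos t - 1) / sin t] :: real^3), 0::real) \<in> KK"
    using t(4) by simp
  moreover have "dist ((vector [0, -1, (cos t - 1) / sin t] :: real^3), 0::real) (vector [0, -1, 0], 0) < \<epsilon>"
    using t(3) by (simp add: dist_Pair_Pair)
  ultimately show "\<exists>y\<in>{d. \<exists>e>0. (0, 1) + e *\<^sub>R d \<in> KK}. dist y (vector [0, -1, 0], 0) < \<epsilon>"
    using t(2) by blast
qed

lemma gK_notan: "((vector [0, -1, 0] :: real^3), 0::real) \<notin> tangent_cone (0, 1) KF"
proof -
  have "tangent_cone (0, 1) KF \<subseteq> {x. (axis 2 1, 0::real) \<bullet> x \<ge> (0::real)}"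
    unfolding tangent_cone_def
  proof (rule closure_minimal)
    show "{d. \<exists>e>0. (0, 1) + e *\<^sub>R d \<in> KF} \<subseteq> {x. (axis 2 1, 0::real) \<bullet> x \<ge> (0::real)}"
    proof
      fix d :: "(real^3) \<times> real" assume "d \<in> {d. \<exists>e>0. (0, 1) + e *\<^sub>R d \<in> KF}"
      then obtain e where e: "e > 0" "(0, 1) + e *\<^sub>R d \<in> KF" by auto
      then have "e * fst d $ 2 \<ge> 0" using KF_props by fastforce
      then show "d \<in> {x. (axis 2 1, 0::real) \<bullet> x \<ge> (0::real)}"
        using e by (simp add: inner_prod_def ax2 zero_le_mult_iff)
    qed
  qed (rule closed_halfspace_ge)
  then show ?thesis by (auto simp: ax2)
qed

lemma gK_span: "((vector [0, -1, 0] :: real^3), 0::real) \<in> span KF"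
proof -
  obtain a b where ab: "(vector [0, -1, 0] :: real^3) = a *\<^sub>R gamma3 (pi/4) + b *\<^sub>R gamma4 (pi/4)"
    using g_comb by blast
  have m: "(gamma3 (pi/4), 1) \<in> KF" "(gamma4 (pi/4), 1) \<in> KF"
    unfolding KF_def memK using gamma34_J
    by (intro exI[of _ 1] exI[of _ "gamma3 (pi/4)"] exI[of _ "gamma4 (pi/4)"]; simp)+
  have "((vector [0, -1, 0] :: real^3), 0::real) =
    a *\<^sub>R (gamma3 (pi/4), 1) + b *\<^sub>R (gamma4 (pi/4), 1) - (a + b) *\<^sub>R (0, 1)"
    using ab by simp
  also have "\<dots> \<in> span KF"
    using m base_KF by (intro span_diff span_add span_scale span_base)
  finally show ?thesis .
qed

lemma not_te: "\<not> tangentially_exposed KK"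
proof
  assume "tangentially_exposed KK"
  then have "\<forall>x\<in>KF. tangent_cone x KK \<inter> span KF = tangent_cone x KF"
    unfolding tangentially_exposed_def using face_K KF_ne by simp
  then have "tangent_cone (0,1) KK \<inter> span KF = tangent_cone (0,1) KF" using base_KF by simp
  then show False using gK_tan gK_span gK_notan by blast
qed

theorem mainTheorem6:
  fixes g :: "real^3" and K :: "((real^3) \<times> real) set"
  defines "g \<equiv> vector [0, -1, 0]"
      and "K \<equiv> cone_gen (exC \<times> {1})"
  shows "is_face exF exC \<and> 0 \<in> exF
    \<and> tangent_cone 0 exC \<inter> span exF \<noteq> tangent_cone 0 exF
    \<and> g \<in> tangent_cone 0 exC \<inter> span exF \<and> g \<notin> tangent_cone 0 exF
    \<and> closed K \<and> convex K \<and> cone K \<and> \<not> tangentially_exposed K"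
proof -
  have KK: "K = KK" unfolding K_def KK_def
    by (rule cone_gen_eq) (auto intro: convex_Times simp: exC_eq)
  have ne: "tangent_cone 0 exC \<inter> span exF \<noteq> tangent_cone 0 exF"
    using g_tan g_span g_notan by blast
  show ?thesis unfolding KK g_def
    by (intro conjI face zero_exF ne g_notan closed_KK convex_KK cone_KK not_te IntI g_tan g_span)
qed

end
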